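(* Let $\delta\in(0,1)$, $k\ge2$, let $G=S_k$ be the star with hub $h$ and $k$ leaves on vertex set $V$ ($n=k+1$ vertices), and $\mathcal H=\{\{i,j\}:\{i,j\}\in E(S_k)\}$. Suppose that one of the sender $S$, receiver $R$ is the hub and the other is a leaf, and the witness set is $W=V\setminus\{S,R\}$ (the remaining $k-1$ leaves). Then $$b_{\mathrm{eff}}=\delta+f(k,\delta),\qquad f(k,\delta)=\frac{2(k+1)(k-1)}{3k}\,\delta^2,$$ where $f>0$, $\partial f/\partial k>0$ and $\partial^2 f/\partial k^2<0$ (viewing $k$ as a real variable $\ge 1$). Hence the number of equilibrium partitions $N(b_{\mathrm{eff}})$ is non-increasing in $n$, and the marginal increase of $b_{\mathrm{eff}}$ from adding a witness diminishes as $n\to\infty$.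
   Context: For a finite simple undirected graph $G=(V,E)$ and $\delta\in(0,1)$: $v^G(S):=\sum_{i\in S}\sum_{j\in S,\,j\neq i}\delta^{t_{ij}(G[S])}$ for $S\subseteq V$, where $t_{ij}(G[S])$ is the distance in the induced subgraph ($\infty$ if disconnected, $\delta^\infty:=0$). For a conference structure $\mathcal H$ and $C\subseteq V$, $C/\mathcal H$ is the partition of $C$ into classes connected via chains of pairwise-intersecting members of $\mathcal H$ contained in $C$; $r^{v^G}_{\mathcal H}(C):=\sum_{B\in C/\mathcal H}v^G(B)$; for $X\subseteq V$, $\mathcal H|_X:=\{H\in\mathcal H:H\subseteq X\}$. $\mu_j(X;u)$ denotes the Shapley value of player $j$ in the TU game $u$ on player set $X$. Bargaining-power components: $b^j_i:=\mu_j(V;r^{v^G}_{\mathcal H})-\mu_j(V\setminus\{i\};r^{v^G}_{\mathcal H|_{V\setminus\{i\}}})$. Effective bias with sender $S$, receiver $R$, witness set $W$: $b_{\mathrm{eff}}:=\bigl(b^S_R+\sum_{w\in W}(b^S_w+b^w_R)\bigr)/(|W|+1)$. For $b>0$, $N(b)$ denotes the unique integer $N\ge1$ with $\beta(N)\le b<\beta(N-1)$, where $\beta(N)=\frac1{2N(N+1)}$ and $\beta(0)=+\infty$; $N$ is non-increasing in $b$. *)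

theory Defs
  imports "HOL-Analysis.Analysis" "HOL-Library.Extended_Real"
begin

text \<open>Graphs: a symmetric irreflexive adjacency relation E on vertex type 'a.
 walk_in E S i j n: there is a walk of length n from i to j using only vertices of S
 (i.e. a walk in the induced subgraph G[S]).\<close>
definition walk_in :: "('a \<Rightarrow> 'a \<Rightarrow> bool) \<Rightarrow> 'a set \<Rightarrow> 'a \<Rightarrow> 'a \<Rightarrow> nat \<Rightarrow> bool" where
  "walk_in E S i j n \<longleftrightarrow> (\<exists>xs. length xs = Suc n \<and> xs ! 0 = i \<and> xs ! n = j \<and> set xs \<subseteq> S
      \<and> (\<forall>t<n. E (xs ! t) (xs ! Suc t)))"

text \<open>delta ^ t_ij(G[S]), with delta ^ infinity = 0 when i, j are disconnected in G[S].\<close>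
definition decay :: "real \<Rightarrow> ('a \<Rightarrow> 'a \<Rightarrow> bool) \<Rightarrow> 'a set \<Rightarrow> 'a \<Rightarrow> 'a \<Rightarrow> real" where
  "decay \<delta> E S i j = (if \<exists>n. walk_in E S i j n then \<delta> ^ (LEAST n. walk_in E S i j n) else 0)"

definition vG :: "real \<Rightarrow> ('a \<Rightarrow> 'a \<Rightarrow> bool) \<Rightarrow> 'a set \<Rightarrow> real" where
  "vG \<delta> E S = (\<Sum>i\<in>S. \<Sum>j\<in>S - {i}. decay \<delta> E S i j)"

definition conf_rel :: "'a set set \<Rightarrow> 'a set \<Rightarrow> ('a \<times> 'a) set" where
  "conf_rel \<H> C = {(i, j). \<exists>H\<in>\<H>. H \<subseteq> C \<and> i \<in> H \<and> j \<in> H}"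

definition conf_partition :: "'a set set \<Rightarrow> 'a set \<Rightarrow> 'a set set" where
  "conf_partition \<H> C = C // ((conf_rel \<H> C)\<^sup>*)"

definition r_val :: "('a set \<Rightarrow> real) \<Rightarrow> 'a set set \<Rightarrow> 'a set \<Rightarrow> real" where
  "r_val v \<H> C = (\<Sum>B\<in>conf_partition \<H> C. v B)"

definition restrict_conf :: "'a set set \<Rightarrow> 'a set \<Rightarrow> 'a set set" where
  "restrict_conf \<H> X = {H\<in>\<H>. H \<subseteq> X}"

definition shapley :: "'a set \<Rightarrow> ('a set \<Rightarrow> real) \<Rightarrow> 'a \<Rightarrow> real" where
  "shapley X u j = (\<Sum>S\<in>Pow (X - {j}).
      fact (card S) * fact (card X - card S - 1) / fact (card X) * (u (insert j S) - u S))"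

definition bp :: "real \<Rightarrow> ('a \<Rightarrow> 'a \<Rightarrow> bool) \<Rightarrow> 'a set \<Rightarrow> 'a set set \<Rightarrow> 'a \<Rightarrow> 'a \<Rightarrow> real" where
  "bp \<delta> E V \<H> j i = shapley V (r_val (vG \<delta> E) \<H>) j
      - shapley (V - {i}) (r_val (vG \<delta> E) (restrict_conf \<H> (V - {i}))) j"

definition b_eff :: "real \<Rightarrow> ('a \<Rightarrow> 'a \<Rightarrow> bool) \<Rightarrow> 'a set \<Rightarrow> 'a set set \<Rightarrow> 'a \<Rightarrow> 'a \<Rightarrow> 'a set \<Rightarrow> real" where
  "b_eff \<delta> E V \<H> S R W =
     (bp \<delta> E V \<H> S R + (\<Sum>w\<in>W. bp \<delta> E V \<H> S w + bp \<delta> E V \<H> w R)) / (real (card W) + 1)"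

definition beta :: "nat \<Rightarrow> ereal" where
  "beta N = (if N = 0 then \<infinity> else ereal (1 / (2 * real N * (real N + 1))))"

definition N_part :: "real \<Rightarrow> nat" where
  "N_part b = (THE N. N \<ge> 1 \<and> beta N \<le> ereal b \<and> ereal b < beta (N - 1))"

definition star_edge :: "'a \<Rightarrow> 'a set \<Rightarrow> 'a \<Rightarrow> 'a \<Rightarrow> bool" where
  "star_edge h L x y \<longleftrightarrow> (x = h \<and> y \<in> L) \<or> (y = h \<and> x \<in> L)"

definition star_conf :: "'a \<Rightarrow> 'a set \<Rightarrow> 'a set set" where
  "star_conf h L = {{h, l} | l. l \<in> L}"

definition f_star :: "real \<Rightarrow> real \<Rightarrow> real" where
  "f_star k \<delta> = 2 * (k + 1) * (k - 1) / (3 * k) * \<delta>\<^sup>2"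

end

theory Submission
  imports Defs
begin


lemma walk0: "walk_in E C i j 0 \<Longrightarrow> i = j"
  unfolding walk_in_def by auto

lemma walk1: "walk_in E C i j (Suc 0) \<Longrightarrow> E i j"
  unfolding walk_in_def by force

lemma walk1I: "E i j \<Longrightarrow> i \<in> C \<Longrightarrow> j \<in> C \<Longrightarrow> walk_in E C i j (Suc 0)"
  unfolding walk_in_def by (rule exI[of _ "[i,j]"]) auto

lemma walk2I: "E i m \<Longrightarrow> E m j \<Longrightarrow> i \<in> C \<Longrightarrow> m \<in> C \<Longrightarrow> j \<in> C \<Longrightarrow> walk_in E C i j 2"
  unfolding walk_in_def
  apply (rule exI[of _ "[i,m,j]"])
  apply (auto simp: less_Suc_eq numeral_2_eq_2)
  done

lemma decay1:
  assumes "i \<noteq> j" "E i j" "i \<in> C" "j \<in> C"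
  shows "decay \<delta> E C i j = \<delta>"
proof -
  have w: "walk_in E C i j (Suc 0)" using walk1I assms by metis
  have "(LEAST n. walk_in E C i j n) = Suc 0"
  proof (rule Least_equality[where P="walk_in E C i j", OF w])
    fix m assume "walk_in E C i j m"
    then show "Suc 0 \<le> m" using walk0[of E C i j] assms(1) by (cases m) auto
  qed
  then show ?thesis using w unfolding decay_def by auto
qed

lemma decay2:
  assumes "i \<noteq> j" "\<not> E i j" "E i m" "E m j" "i \<in> C" "j \<in> C" "m \<in> C"
  shows "decay \<delta> E C i j = \<delta>^2"
proof -
  have w: "walk_in E C i j 2" using walk2I assms by metis
  have "(LEAST n. walk_in E C i j n) = 2"
  proof (rule Least_equality[where P="walk_in E C i j", OF w])
    fix n assume a: "walk_in E C i j n"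
    show "2 \<le> n"
    proof (rule ccontr)
      assume "\<not> 2 \<le> n"
      then have "n = 0 \<or> n = Suc 0" by auto
      then show False using a walk0 walk1 assms(1,2) by metis
    qed
  qed
  then show ?thesis using w unfolding decay_def by auto
qed

definition gv :: "real \<Rightarrow> nat \<Rightarrow> real" where
  "gv \<delta> m = 2 * real m * \<delta> + real m * (real m - 1) * \<delta>^2"

lemma vG_star:
  assumes "h \<notin> L" "M \<subseteq> L" "finite M"
  shows "vG \<delta> (star_edge h L) (insert h M) = gv \<delta> (card M)"
proof -
  let ?E = "star_edge h L" and ?C = "insert h M"
  have hM: "h \<notin> M" using assms by auto
  have A: "(\<Sum>j\<in>?C - {h}. decay \<delta> ?E ?C h j) = real (card M) * \<delta>"
  proof -
    have "(\<Sum>j\<in>?C - {h}. decay \<delta> ?E ?C h j) = (\<Sum>j\<in>M. \<delta>)"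
      using hM by (intro sum.cong) (auto intro!: decay1 simp: star_edge_def assms(2)[THEN subsetD])
    then show ?thesis by simp
  qed
  have B: "(\<Sum>j\<in>?C - {l}. decay \<delta> ?E ?C l j) = \<delta> + (real (card M) - 1) * \<delta>^2" if l: "l \<in> M" for l
  proof -
    have eq: "?C - {l} = insert h (M - {l})" using l hM by auto
    have "(\<Sum>j\<in>?C - {l}. decay \<delta> ?E ?C l j) = decay \<delta> ?E ?C l h + (\<Sum>j\<in>M - {l}. decay \<delta> ?E ?C l j)"
      unfolding eq using hM assms(3) by (subst sum.insert) auto
    also have "decay \<delta> ?E ?C l h = \<delta>"
      using l hM assms by (intro decay1) (auto simp: star_edge_def)
    also have "(\<Sum>j\<in>M - {l}. decay \<delta> ?E ?C l j) = (\<Sum>j\<in>M - {l}. \<delta>^2)"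
      using l hM assms by (intro sum.cong refl decay2[where m=h]) (auto simp: star_edge_def)
    also have "\<dots> = (real (card M) - 1) * \<delta>^2"
    proof -
      have "card M \<ge> 1" using l assms(3) by (metis One_nat_def Suc_leI card_gt_0_iff empty_iff)
      then show ?thesis using l assms(3) by (simp add: of_nat_diff)
    qed
    finally show ?thesis .
  qed
  have "vG \<delta> ?E ?C = (\<Sum>j\<in>?C - {h}. decay \<delta> ?E ?C h j) + (\<Sum>l\<in>M. \<Sum>j\<in>?C - {l}. decay \<delta> ?E ?C l j)"
    unfolding vG_def using hM assms(3) by (subst sum.insert) auto
  also have "\<dots> = real (card M) * \<delta> + (\<Sum>l\<in>M. \<delta> + (real (card M) - 1) * \<delta>^2)"
    using A B by simp
  also have "\<dots> = gv \<delta> (card M)" by (simp add: gv_def algebra_simps)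
  finally show ?thesis .
qed




lemma vG_single: "vG \<delta> E {x} = 0"
  unfolding vG_def by simp

lemma r_val_noh:
  assumes "\<forall>H'\<in>H. h \<in> H'" "h \<notin> C"
  shows "r_val (vG \<delta> E) H C = 0"
proof -
  have "conf_rel H C = {}" using assms unfolding conf_rel_def by auto
  then have "conf_partition H C = (\<Union>x\<in>C. {{x}})"
    unfolding conf_partition_def quotient_def by simp
  then show ?thesis unfolding r_val_def by (auto intro!: sum.neutral simp: vG_single)
qed

lemma r_val_h:
  assumes "h \<notin> L" "C \<subseteq> insert h L" "h \<in> C" "finite L"
    and "\<forall>l\<in>C-{h}. {h,l} \<in> H"
  shows "r_val (vG \<delta> (star_edge h L)) H C = gv \<delta> (card C - 1)"
proof -
  let ?R = "conf_rel H C"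
  have RC: "?R \<subseteq> C \<times> C" unfolding conf_rel_def by auto
  have cls: "?R\<^sup>* `` {a} = C" if a: "a \<in> C" for a
  proof
    show "?R\<^sup>* `` {a} \<subseteq> C"
    proof
      fix y assume "y \<in> ?R\<^sup>* `` {a}"
      then have "(a, y) \<in> ?R\<^sup>*" by simp
      then show "y \<in> C"
        by (induction rule: rtrancl_induct) (use a RC in auto)
    qed
  next
    show "C \<subseteq> ?R\<^sup>* `` {a}"
    proof
      fix y assume y: "y \<in> C"
      have ah: "(a, h) \<in> ?R\<^sup>*"
      proof (cases "a = h")
        case False
        then have ha: "{h,a} \<in> H" using assms(5) a by blast
        have "{h,a} \<subseteq> C" using a assms(3) by simp
        then have "(a, h) \<in> ?R" unfolding conf_rel_def using ha by blast
        then show ?thesis by auto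
      qed auto
      have hy: "(h, y) \<in> ?R\<^sup>*"
      proof (cases "y = h")
        case False
        then have hy: "{h,y} \<in> H" using assms(5) y by blast
        have "{h,y} \<subseteq> C" using y assms(3) by simp
        then have "(h, y) \<in> ?R" unfolding conf_rel_def using hy by blast
        then show ?thesis by auto
      qed auto
      show "y \<in> ?R\<^sup>* `` {a}" using rtrancl_trans[OF ah hy] by simp
    qed
  qed
  have "conf_partition H C = {C}"
    unfolding conf_partition_def quotient_def using cls assms(3) by auto
  then have "r_val (vG \<delta> (star_edge h L)) H C = vG \<delta> (star_edge h L) C"
    unfolding r_val_def by simp
  also have "vG \<delta> (star_edge h L) C = gv \<delta> (card C - 1)"
  proof -
    have eqC: "insert h (C - {h}) = C" using assms(3) by auto
    have v: "vG \<delta> (star_edge h L) (insert h (C - {h})) = gv \<delta> (card (C - {h}))"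
      by (intro vG_star) (use assms in \<open>auto intro: finite_subset\<close>)
    then show ?thesis unfolding eqC using assms(3) by simp
  qed
  finally show ?thesis .
qed

definition U :: "real \<Rightarrow> 'a \<Rightarrow> 'a set \<Rightarrow> real" where
  "U \<delta> h C = (if h \<in> C then gv \<delta> (card C - 1) else 0)"

lemma shapley_cong:
  assumes "j \<in> X" "\<And>S. S \<subseteq> X \<Longrightarrow> u S = u' S"
  shows "shapley X u j = shapley X u' j"
  unfolding shapley_def
proof (intro sum.cong refl)
  fix S assume "S \<in> Pow (X - {j})"
  then have "S \<subseteq> X" "insert j S \<subseteq> X" using assms(1) by auto
  then show "fact (card S) * fact (card X - card S - 1) / fact (card X) * (u (insert j S) - u S) =
    fact (card S) * fact (card X - card S - 1) / fact (card X) * (u' (insert j S) - u' S)"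
    using assms(2) by simp
qed




lemma canc: "(F::real) \<noteq> 0 \<Longrightarrow> F * Y / (a * b * F) = Y / (b * a)"
  by (simp add: mult.commute)
lemma canc2: "(F::real) \<noteq> 0 \<Longrightarrow> F * Y / (a * F) = Y / a"
  by simp

lemma sum_Pow_card:
  assumes "finite A"
  shows "(\<Sum>S\<in>Pow A. \<phi> (card S)) = (\<Sum>s\<le>card A. real (card A choose s) * \<phi> s)"
proof -
  have "(\<Sum>S\<in>Pow A. \<phi> (card S)) = (\<Sum>s\<le>card A. \<Sum>S\<in>{S. S \<in> Pow A \<and> card S = s}. \<phi> (card S))"
    using assms by (intro sum.group[symmetric]) (auto intro: card_mono)
  also have "\<dots> = (\<Sum>s\<le>card A. real (card A choose s) * \<phi> s)"
  proof (intro sum.cong refl)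
    fix s
    have "(\<Sum>S\<in>{S. S \<in> Pow A \<and> card S = s}. \<phi> (card S)) = (\<Sum>S\<in>{S. S \<subseteq> A \<and> card S = s}. \<phi> s)"
      by (intro sum.cong) auto
    also have "\<dots> = real (card A choose s) * \<phi> s" using n_subsets[OF assms, of s] by simp
    finally show "(\<Sum>S\<in>{S. S \<in> Pow A \<and> card S = s}. \<phi> (card S)) = real (card A choose s) * \<phi> s" .
  qed
  finally show ?thesis .
qed

lemma sum_gv: "(\<Sum>s\<le>M. gv \<delta> s) = real M * (real M + 1) * \<delta> + (real M + 1) * real M * (real M - 1) * \<delta>^2 / 3"
proof (induction M)
  case (Suc M)
  then show ?case by (simp add: gv_def) (simp add: field_simps power2_eq_square)
qed (simp add: gv_def)

lemma sum_lin: "(\<Sum>t\<le>M. (real t + 1) * (2 * \<delta> + 2 * real t * \<delta>^2)) = (real M + 1) * (real M + 2) * (\<delta> + 2 * real M * \<delta>^2 / 3)"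
proof (induction M)
  case (Suc M)
  then show ?case by simp (simp add: field_simps power2_eq_square)
qed simp

lemma shapley_hub:
  assumes "finite X" "h \<in> X"
  shows "shapley X (U \<delta> h) h = real (card X - 1) * \<delta> + real (card X - 1) * (real (card X) - 2) * \<delta>^2 / 3"
proof -
  define M where "M = card X - 1"
  have "card X > 0" using assms card_gt_0_iff by blast
  then have cX: "card X = M + 1" using M_def by simp
  have cA: "card (X - {h}) = M" using assms M_def by simp
  have "shapley X (U \<delta> h) h = (\<Sum>S\<in>Pow (X - {h}). fact (card S) * fact (M + 1 - card S - 1) / fact (M + 1) * gv \<delta> (card S))"
    unfolding shapley_def cX
  proof (intro sum.cong refl)
    fix S assume S: "S \<in> Pow (X - {h})"
    then have "finite S" "h \<notin> S" using assms(1) by (auto intro: finite_subset)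
    then have "U \<delta> h (insert h S) - U \<delta> h S = gv \<delta> (card S)" unfolding U_def by simp
    then show "fact (card S) * fact (M + 1 - card S - 1) / fact (M + 1) * (U \<delta> h (insert h S) - U \<delta> h S) =
         fact (card S) * fact (M + 1 - card S - 1) / fact (M + 1) * gv \<delta> (card S)" by simp
  qed
  also have "\<dots> = (\<Sum>s\<le>M. real (M choose s) * (fact s * fact (M + 1 - s - 1) / fact (M + 1) * gv \<delta> s))"
    using sum_Pow_card[OF finite_Diff[OF assms(1), of "{h}"], of "\<lambda>s. fact s * fact (M + 1 - s - 1) / fact (M + 1) * gv \<delta> s"] unfolding cA .
  also have "\<dots> = (\<Sum>s\<le>M. gv \<delta> s / (real M + 1))"
  proof (intro sum.cong refl)
    fix s assume "s \<in> {..M}"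
    then have sM: "s \<le> M" by simp
    have f: "fact s * fact (M - s) * real (M choose s) = fact M"
      using binomial_fact_lemma[OF sM] by (metis of_nat_fact of_nat_mult)
    have e: "fact (M+1) = (real M + 1) * (fact M :: real)" by simp
    have "real (M choose s) * (fact s * fact (M + 1 - s - 1) / fact (M + 1) * gv \<delta> s) =
       (fact s * fact (M - s) * real (M choose s)) * gv \<delta> s / ((real M + 1) * fact M)"
      unfolding e by (simp add: field_simps)
    also have "\<dots> = gv \<delta> s / (real M + 1)" unfolding f by (rule canc2) simp
    finally show "real (M choose s) * (fact s * fact (M + 1 - s - 1) / fact (M + 1) * gv \<delta> s) = gv \<delta> s / (real M + 1)" .
  qed
  also have "\<dots> = (\<Sum>s\<le>M. gv \<delta> s) / (real M + 1)" by (simp add: sum_divide_distrib)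
  also have "\<dots> = real M * \<delta> + real M * (real M - 1) * \<delta>^2 / 3"
  proof -
    have e: "(\<Sum>s\<le>M. gv \<delta> s) = (real M + 1) * (real M * \<delta> + real M * (real M - 1) * \<delta>^2 / 3)"
      unfolding sum_gv by (simp add: algebra_simps)
    have nz: "real M + 1 \<noteq> 0" by simp
    show ?thesis unfolding e nonzero_mult_div_cancel_left[OF nz] ..
  qed
  finally show ?thesis unfolding cX by (simp add: algebra_simps)
qed

lemma shapley_leaf:
  assumes "finite A" "h \<notin> A" "j \<notin> A" "h \<noteq> j"
  shows "shapley (insert h (insert j A)) (U \<delta> h) j = \<delta> + 2 * \<delta>^2 * real (card A) / 3"
proof -
  define M where "M = card A"
  let ?X = "insert h (insert j A)"
  have cX: "card ?X = M + 2" using assms M_def by simp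
  have XA: "?X - {j} = insert h A" using assms by auto
  let ?w = "\<lambda>S. fact (card S) * fact (M + 2 - card S - 1) / fact (M + 2) * (U \<delta> h (insert j S) - U \<delta> h S)"
  have "shapley ?X (U \<delta> h) j = sum ?w (Pow (insert h A))"
    unfolding shapley_def cX XA ..
  also have "\<dots> = sum ?w (Pow A) + sum ?w (insert h ` Pow A)"
    unfolding Pow_insert using assms by (intro sum.union_disjoint) auto
  also have "sum ?w (Pow A) = 0"
    using assms unfolding U_def by (intro sum.neutral) auto
  also have "sum ?w (insert h ` Pow A) = sum (?w \<circ> insert h) (Pow A)"
  proof (rule sum.reindex)
    show "inj_on (insert h) (Pow A)"
      unfolding inj_on_def using assms(2) by (metis PowD insert_ident subset_iff)
  qed
  also have "\<dots> = (\<Sum>T\<in>Pow A. fact (card T + 1) * fact (M - card T) / fact (M + 2) * (2 * \<delta> + 2 * real (card T) * \<delta>^2))"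
  proof (intro sum.cong refl)
    fix T assume "T \<in> Pow A"
    then have T: "finite T" "h \<notin> T" "j \<notin> T" using assms by (auto intro: finite_subset)
    have c1: "card (insert h T) = card T + 1" using T by simp
    have c2: "card (insert j (insert h T)) = card T + 2" using T assms(4) by simp
    have "U \<delta> h (insert j (insert h T)) - U \<delta> h (insert h T) = 2 * \<delta> + 2 * real (card T) * \<delta>^2"
      unfolding U_def c1 c2 by (simp add: gv_def algebra_simps power2_eq_square)
    moreover have "M + 2 - (card T + 1) - 1 = M - card T" by simp
    ultimately show "(?w \<circ> insert h) T = fact (card T + 1) * fact (M - card T) / fact (M + 2) * (2 * \<delta> + 2 * real (card T) * \<delta>^2)"
      using c1 by simp
  qed
  also have "\<dots> = (\<Sum>t\<le>M. real (M choose t) * (fact (t + 1) * fact (M - t) / fact (M + 2) * (2 * \<delta> + 2 * real t * \<delta>^2)))"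
    using sum_Pow_card[OF assms(1), of "\<lambda>t. fact (t + 1) * fact (M - t) / fact (M + 2) * (2 * \<delta> + 2 * real t * \<delta>^2)"]
    unfolding M_def by (simp only:)
  also have "\<dots> = (\<Sum>t\<le>M. (real t + 1) * (2 * \<delta> + 2 * real t * \<delta>^2) / ((real M + 1) * (real M + 2)))"
  proof (intro sum.cong refl)
    fix s assume "s \<in> {..M}"
    then have sM: "s \<le> M" by simp
    have f: "fact s * fact (M - s) * real (M choose s) = fact M"
      using binomial_fact_lemma[OF sM] by (metis of_nat_fact of_nat_mult)
    have e1: "fact (M+2) = (real M + 2) * (real M + 1) * (fact M :: real)"
      by (simp add: numeral_2_eq_2 algebra_simps)
    have e2: "fact (s+1) = (real s + 1) * (fact s :: real)" by simp
    show "real (M choose s) * (fact (s + 1) * fact (M - s) / fact (M + 2) * (2 * \<delta> + 2 * real s * \<delta>^2)) =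
       (real s + 1) * (2 * \<delta> + 2 * real s * \<delta>^2) / ((real M + 1) * (real M + 2))"
    proof -
      have cpos: "real (M choose s) > 0" using sM by simp
      let ?X = "2 * \<delta> + 2 * real s * \<delta>^2"
      have "real (M choose s) * (fact (s + 1) * fact (M - s) / fact (M + 2) * ?X) =
        (fact s * fact (M - s) * real (M choose s)) * ((real s + 1) * ?X) / ((real M + 2) * (real M + 1) * fact M)"
        unfolding e1 e2 by (simp add: field_simps)
      also have "\<dots> = (real s + 1) * ?X / ((real M + 1) * (real M + 2))"
        unfolding f by (rule canc) simp
      finally show ?thesis .
    qed
  qed
  also have "\<dots> = (\<Sum>t\<le>M. (real t + 1) * (2 * \<delta> + 2 * real t * \<delta>^2)) / ((real M + 1) * (real M + 2))"
    by (simp add: sum_divide_distrib)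
  also have "\<dots> = \<delta> + 2 * \<delta>^2 * real M / 3"
  proof -
    have nz: "(real M + 1) * (real M + 2) \<noteq> 0" by (simp add: add_pos_pos)
    show ?thesis unfolding sum_lin nonzero_mult_div_cancel_left[OF nz] by (simp add: algebra_simps)
  qed
  finally show ?thesis using M_def by simp
qed

lemma shapley_zero:
  assumes "\<And>S. S \<subseteq> X \<Longrightarrow> u S = 0" "j \<in> X"
  shows "shapley X u j = 0"
  unfolding shapley_def
proof (intro sum.neutral ballI)
  fix S assume "S \<in> Pow (X - {j})"
  then have "S \<subseteq> X" "insert j S \<subseteq> X" using assms(2) by auto
  then show "fact (card S) * fact (card X - card S - 1) / fact (card X) * (u (insert j S) - u S) = 0"
    using assms(1) by simp
qed




lemma f_alt: "f_star y \<delta> = 2 * \<delta>^2 / 3 * (y - inverse y)"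
proof (cases "y = 0")
  case True then show ?thesis by (simp add: f_star_def)
next
  case False then show ?thesis by (simp add: f_star_def field_simps power2_eq_square)
qed

lemma f_fun: "(\<lambda>y. f_star y \<delta>) = (\<lambda>y. 2 * \<delta>^2 / 3 * (y - inverse y))"
  by (rule ext) (rule f_alt)

lemma f_deriv1:
  assumes "x \<noteq> 0"
  shows "((\<lambda>y. f_star y \<delta>) has_real_derivative 2 * \<delta>^2 / 3 * (1 + inverse (x^2))) (at x)"
  unfolding f_fun using assms
  by (auto intro!: derivative_eq_intros simp: field_simps power2_eq_square)

lemma f_deriv_eq: "x \<noteq> 0 \<Longrightarrow> deriv (\<lambda>y. f_star y \<delta>) x = 2 * \<delta>^2 / 3 * (1 + inverse (x^2))"
  using f_deriv1 DERIV_imp_deriv by blast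

lemma f_deriv2:
  assumes "x > 0"
  shows "(deriv (\<lambda>y. f_star y \<delta>) has_real_derivative (- 4 * \<delta>^2 / 3 / x^3)) (at x)"
proof (rule has_field_derivative_transform_within_open[where S="{0<..}"])
  show "((\<lambda>y. 2 * \<delta>^2 / 3 * (1 + inverse (y^2))) has_real_derivative (- 4 * \<delta>^2 / 3 / x^3)) (at x)"
    using assms by (auto intro!: derivative_eq_intros simp: field_simps power2_eq_square power3_eq_cube)
  show "\<And>y. y \<in> {0<..} \<Longrightarrow> 2 * \<delta>^2 / 3 * (1 + inverse (y^2)) = deriv (\<lambda>y. f_star y \<delta>) y"
    using f_deriv_eq by force
qed (use assms in auto)

lemma analytic:
  assumes "0 < \<delta>" "x \<ge> (1::real)"
  shows "(\<lambda>y. f_star y \<delta>) differentiable (at x) \<and> deriv (\<lambda>y. f_star y \<delta>) x > 0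
          \<and> deriv (\<lambda>y. f_star y \<delta>) differentiable (at x)
          \<and> deriv (deriv (\<lambda>y. f_star y \<delta>)) x < 0"
proof -
  have x0: "x \<noteq> 0" "x > 0" using assms by auto
  have d1: "deriv (\<lambda>y. f_star y \<delta>) x > 0"
    unfolding f_deriv_eq[OF x0(1)] using assms by (simp add: add_pos_nonneg)
  have d2: "deriv (deriv (\<lambda>y. f_star y \<delta>)) x = - 4 * \<delta>^2 / 3 / x^3"
    using f_deriv2[OF x0(2)] DERIV_imp_deriv by blast
  have d2n: "- 4 * \<delta>^2 / 3 / x^3 < 0" using assms by (simp add: divide_neg_pos)
  show ?thesis
    using f_deriv1[OF x0(1)] f_deriv2[OF x0(2)] d1 d2 d2n
    by (auto simp: real_differentiable_def)
qed

lemma f_mono: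
  assumes "0 < y1" "y1 \<le> y2"
  shows "f_star y1 \<delta> \<le> f_star y2 \<delta>"
proof -
  have "inverse y2 \<le> inverse y1" using assms by (simp add: le_imp_inverse_le)
  then have "y1 - inverse y1 \<le> y2 - inverse y2" using assms by linarith
  moreover have "2 * \<delta>^2 / 3 \<ge> 0" by simp
  ultimately show ?thesis unfolding f_alt by (metis mult_left_mono)
qed

lemma f_concave:
  assumes "0 < \<delta>" "2 \<le> m"
  shows "f_star (real m + 2) \<delta> - f_star (real m + 1) \<delta> < f_star (real m + 1) \<delta> - f_star (real m) \<delta>"
proof -
  have m: "real m \<ge> 2" using assms by simp
  have key: "1 / (real m + 1) - 1 / (real m + 2) < 1 / real m - 1 / (real m + 1)"
  proof -
    have e1: "1 / (real m + 1) - 1 / (real m + 2) = 1 / ((real m + 1) * (real m + 2))"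
      by (simp add: field_simps)
    have e2: "1 / real m - 1 / (real m + 1) = 1 / (real m * (real m + 1))"
      using m by (simp add: field_simps)
    have p1: "0 < real m * (real m + 1)" using m by simp
    have p2: "0 < (real m + 1) * (real m + 2)" using m by simp
    have lt: "real m * (real m + 1) < (real m + 1) * (real m + 2)" using m by (simp add: algebra_simps)
    show ?thesis unfolding e1 e2 using lt mult_pos_pos[OF p2 p1] by (intro divide_strict_left_mono) auto
  qed
  define c where "c = 2 * \<delta>^2 / 3"
  have c0: "c > 0" unfolding c_def using assms by simp
  have key': "inverse (real m + 1) - inverse (real m + 2) < inverse (real m) - inverse (real m + 1)"
    using key by (simp add: inverse_eq_divide)
  have fa: "f_star y \<delta> = c * (y - inverse y)" for y unfolding c_def by (rule f_alt)
  have "f_star (real m + 2) \<delta> - f_star (real m + 1) \<delta> = c * (1 + (inverse (real m + 1) - inverse (real m + 2)))"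
    unfolding fa by (simp add: algebra_simps)
  also have "\<dots> < c * (1 + (inverse (real m) - inverse (real m + 1)))"
    using key' c0 by (intro mult_strict_left_mono) auto
  also have "\<dots> = f_star (real m + 1) \<delta> - f_star (real m) \<delta>"
    unfolding fa by (simp add: algebra_simps)
  finally show ?thesis .
qed

lemma beta_anti:
  assumes "m \<le> n"
  shows "beta n \<le> beta m"
proof (cases "m = 0")
  case True then show ?thesis by (simp add: beta_def)
next
  case False
  then have n0: "n \<noteq> 0" using assms by auto
  have "2 * real m * (real m + 1) \<le> 2 * real n * (real n + 1)"
    using assms by (intro mult_mono) auto
  note le = this
  have pm: "0 < 2 * real m * (real m + 1)" using False by simp
  have pn: "0 < 2 * real n * (real n + 1)" using n0 by simp
  have "1 / (2 * real n * (real n + 1)) \<le> 1 / (2 * real m * (real m + 1))"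
    by (rule divide_left_mono[OF le]) (simp, rule mult_pos_pos[OF pn pm])
  then show ?thesis using False n0 by (simp add: beta_def)
qed

definition PN :: "real \<Rightarrow> nat \<Rightarrow> bool" where
  "PN b N \<longleftrightarrow> N \<ge> 1 \<and> beta N \<le> ereal b \<and> ereal b < beta (N - 1)"

lemma PN_unique: "PN b N1 \<Longrightarrow> PN b N2 \<Longrightarrow> N1 = N2"
proof (rule ccontr)
  assume a: "PN b N1" "PN b N2" "N1 \<noteq> N2"
  have *: False if "PN b A" "PN b B" "A < B" for A B
  proof -
    have "beta (B - 1) \<le> beta A" using that(3) by (intro beta_anti) auto
    then show False using that unfolding PN_def by (meson le_less_trans not_le)
  qed
  show False using a *[of N1 N2] *[of N2 N1] by (metis linorder_neqE_nat)
qed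

lemma PN_exists:
  assumes "b > 0"
  shows "\<exists>N. PN b N"
proof -
  obtain n :: nat where n: "1 / b < real n" using reals_Archimedean2 by blast
  have "0 < 1 / b" using assms by simp
  then have "real n > 0" using n by linarith
  then have n0: "n \<ge> 1" by simp
  have "1 / (2 * real n * (real n + 1)) \<le> 1 / real n"
    using n0 by (intro divide_left_mono) auto
  also have "1 / real n < b" using n assms n0 by (simp add: field_simps)
  finally have bn: "beta n \<le> ereal b" using n0 by (simp add: beta_def)
  define N where "N = (LEAST N. beta N \<le> ereal b)"
  have bN: "beta N \<le> ereal b" unfolding N_def by (rule LeastI[of _ n]) (rule bn)
  have N0: "N \<ge> 1"
  proof (rule ccontr)
    assume "\<not> N \<ge> 1"
    then have "N = 0" by simp
    then show False using bN by (simp add: beta_def)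
  qed
  have "\<not> beta (N - 1) \<le> ereal b"
    unfolding N_def by (rule not_less_Least) (use N0 N_def in auto)
  then have "ereal b < beta (N - 1)" by simp
  then show ?thesis using N0 bN unfolding PN_def by blast
qed

lemma N_part_PN: "b > 0 \<Longrightarrow> PN b (N_part b)"
  unfolding N_part_def PN_def[symmetric]
  by (rule theI') (use PN_exists PN_unique in blast)

lemma N_part_mono:
  assumes "0 < b1" "b1 \<le> b2"
  shows "N_part b2 \<le> N_part b1"
proof (rule ccontr)
  assume "\<not> N_part b2 \<le> N_part b1"
  then have lt: "N_part b1 \<le> N_part b2 - 1" by simp
  have p1: "PN b1 (N_part b1)" using N_part_PN assms by simp
  have p2: "PN b2 (N_part b2)" using N_part_PN assms by simp
  have "beta (N_part b2 - 1) \<le> beta (N_part b1)" using lt by (rule beta_anti)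
  then have "ereal b2 < ereal b1" using p1 p2 unfolding PN_def by (meson le_less_trans less_le_trans)
  then show False using assms by simp
qed




context
  fixes \<delta> :: real and k :: nat and h :: 'a and L :: "'a set"
  assumes fin: "finite L" and cardL: "card L = k" and hL: "h \<notin> L" and k2: "2 \<le> k"
begin


lemma HH_h: "\<forall>H'\<in>(star_conf h L). h \<in> H'" unfolding star_conf_def by auto

lemma game_V: "C \<subseteq> (insert h L) \<Longrightarrow> r_val (vG \<delta> (star_edge h L)) (star_conf h L) C = U \<delta> h C"
proof (cases "h \<in> C")
  case True
  assume C: "C \<subseteq> (insert h L)"
  have "\<forall>l\<in>C-{h}. {h,l} \<in> (star_conf h L)" using C unfolding star_conf_def by auto
  then show ?thesis using r_val_h[OF hL C True fin] True unfolding U_def by simp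
next
  case False
  then show ?thesis using r_val_noh[OF HH_h False] unfolding U_def by simp
qed

lemma game_leaf: assumes i: "i \<in> L"
  shows "C \<subseteq> (insert h L) - {i} \<Longrightarrow> r_val (vG \<delta> (star_edge h L)) (restrict_conf (star_conf h L) ((insert h L) - {i})) C = U \<delta> h C"
proof (cases "h \<in> C")
  case True
  assume C: "C \<subseteq> (insert h L) - {i}"
  have "\<forall>l\<in>C-{h}. {h,l} \<in> restrict_conf (star_conf h L) ((insert h L) - {i})"
    using C hL i unfolding star_conf_def restrict_conf_def by auto
  then show ?thesis using r_val_h[OF hL _ True fin] C True unfolding U_def by auto
next
  case False
  have "\<forall>H'\<in>restrict_conf (star_conf h L) ((insert h L) - {i}). h \<in> H'" using HH_h unfolding restrict_conf_def by auto
  then show ?thesis using r_val_noh[OF _ False] False unfolding U_def by simp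
qed

lemma game_hub: "C \<subseteq> (insert h L) - {h} \<Longrightarrow> r_val (vG \<delta> (star_edge h L)) (restrict_conf (star_conf h L) ((insert h L) - {h})) C = 0"
proof -
  assume C: "C \<subseteq> (insert h L) - {h}"
  have "\<forall>H'\<in>restrict_conf (star_conf h L) ((insert h L) - {h}). h \<in> H'" using HH_h unfolding restrict_conf_def by auto
  moreover have "h \<notin> C" using C by auto
  ultimately show ?thesis by (rule r_val_noh)
qed

lemma cardV: "card (insert h L) = k + 1" using fin hL cardL by simp

lemma phi_hub_V: "shapley (insert h L) (r_val (vG \<delta> (star_edge h L)) (star_conf h L)) h = real k * \<delta> + real k * (real k - 1) * \<delta>^2 / 3"
proof -
  have "shapley (insert h L) (r_val (vG \<delta> (star_edge h L)) (star_conf h L)) h = shapley (insert h L) (U \<delta> h) h"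
    by (rule shapley_cong) (auto simp: game_V)
  also have "\<dots> = real k * \<delta> + real k * (real k - 1) * \<delta>^2 / 3"
    using shapley_hub[of "insert h L" h \<delta>] fin cardV by (simp add: algebra_simps)
  finally show ?thesis .
qed

lemma phi_hub_leaf: assumes i: "i \<in> L"
  shows "shapley ((insert h L) - {i}) (r_val (vG \<delta> (star_edge h L)) (restrict_conf (star_conf h L) ((insert h L) - {i}))) h
    = (real k - 1) * \<delta> + (real k - 1) * (real k - 2) * \<delta>^2 / 3"
proof -
  have hi: "h \<noteq> i" using i hL by auto
  have "shapley ((insert h L) - {i}) (r_val (vG \<delta> (star_edge h L)) (restrict_conf (star_conf h L) ((insert h L) - {i}))) h = shapley ((insert h L) - {i}) (U \<delta> h) h"
    by (rule shapley_cong) (use hi game_leaf[OF i] in auto)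
  also have "\<dots> = (real k - 1) * \<delta> + (real k - 1) * (real k - 2) * \<delta>^2 / 3"
  proof -
    have c: "card ((insert h L) - {i}) = k" using cardV i by simp
    have k1: "real (k - 1) = real k - 1" using k2 by simp
    show ?thesis using shapley_hub[of "insert h L - {i}" h \<delta>] fin hi c k1 by (simp add: algebra_simps)
  qed
  finally show ?thesis .
qed

lemma phi_leaf_V: assumes j: "j \<in> L"
  shows "shapley (insert h L) (r_val (vG \<delta> (star_edge h L)) (star_conf h L)) j = \<delta> + 2 * \<delta>^2 * (real k - 1) / 3"
proof -
  have "shapley (insert h L) (r_val (vG \<delta> (star_edge h L)) (star_conf h L)) j = shapley (insert h L) (U \<delta> h) j"
    by (rule shapley_cong) (use j game_V in auto)
  also have "shapley (insert h L) (U \<delta> h) j = \<delta> + 2 * \<delta>^2 * real (card (L - {j})) / 3"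
  proof -
    have eq: "insert h (insert j (L - {j})) = insert h L" using j by auto
    have "shapley (insert h (insert j (L - {j}))) (U \<delta> h) j = \<delta> + 2 * \<delta>^2 * real (card (L - {j})) / 3"
      using j hL fin by (intro shapley_leaf) auto
    then show ?thesis unfolding eq .
  qed
  also have "real (card (L - {j})) = real k - 1" using j fin cardL k2 by (simp add: of_nat_diff)
  finally show ?thesis .
qed

lemma phi_leaf_leaf: assumes j: "j \<in> L" and i: "i \<in> L" and ij: "i \<noteq> j"
  shows "shapley ((insert h L) - {i}) (r_val (vG \<delta> (star_edge h L)) (restrict_conf (star_conf h L) ((insert h L) - {i}))) j = \<delta> + 2 * \<delta>^2 * (real k - 2) / 3"
proof -
  have "shapley ((insert h L) - {i}) (r_val (vG \<delta> (star_edge h L)) (restrict_conf (star_conf h L) ((insert h L) - {i}))) j = shapley ((insert h L) - {i}) (U \<delta> h) j"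
    by (rule shapley_cong) (use j ij game_leaf[OF i] in auto)
  also have "shapley ((insert h L) - {i}) (U \<delta> h) j = \<delta> + 2 * \<delta>^2 * real (card (L - {i, j})) / 3"
  proof -
    have eq: "insert h (insert j (L - {i, j})) = (insert h L) - {i}" using j i ij hL by auto
    have "shapley (insert h (insert j (L - {i, j}))) (U \<delta> h) j = \<delta> + 2 * \<delta>^2 * real (card (L - {i, j})) / 3"
      using j hL fin by (intro shapley_leaf) auto
    then show ?thesis unfolding eq .
  qed
  also have "real (card (L - {i, j})) = real k - 2"
  proof -
    have "card (L - {i, j}) = k - 2" using i j ij fin cardL by (simp add: card_Diff_subset)
    then show ?thesis using k2 by (simp add: of_nat_diff)
  qed
  finally show ?thesis .
qed

lemma phi_leaf_hub: assumes j: "j \<in> L"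
  shows "shapley ((insert h L) - {h}) (r_val (vG \<delta> (star_edge h L)) (restrict_conf (star_conf h L) ((insert h L) - {h}))) j = 0"
  by (rule shapley_zero) (use j hL game_hub in auto)

lemma bp_hub_leaf: assumes i: "i \<in> L" shows "bp \<delta> (star_edge h L) (insert h L) (star_conf h L) h i = \<delta> + 2 * (real k - 1) * \<delta>^2 / 3"
  unfolding bp_def phi_hub_V phi_hub_leaf[OF i] by (simp add: field_simps power2_eq_square)

lemma bp_leaf_leaf: assumes i: "i \<in> L" and j: "j \<in> L" and ij: "i \<noteq> j"
  shows "bp \<delta> (star_edge h L) (insert h L) (star_conf h L) j i = 2 * \<delta>^2 / 3"
  unfolding bp_def phi_leaf_V[OF j] phi_leaf_leaf[OF j i ij] by (simp add: field_simps)

lemma bp_leaf_hub: assumes j: "j \<in> L" shows "bp \<delta> (star_edge h L) (insert h L) (star_conf h L) j h = \<delta> + 2 * (real k - 1) * \<delta>^2 / 3"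
  unfolding bp_def phi_leaf_V[OF j] phi_leaf_hub[OF j] by (simp add: field_simps)

lemma final_alg:
  "(A + (real k - 1) * (A + 2 * \<delta>^2 / 3)) / (real k - 1 + 1) = \<delta> + f_star (real k) \<delta>"
  if "A = \<delta> + 2 * (real k - 1) * \<delta>^2 / 3"
proof -
  have k0: "real k \<noteq> 0" using k2 by simp
  show ?thesis unfolding that f_star_def using k0 by (simp add: field_simps power2_eq_square)
qed

lemma beff_main:
  assumes "(S = h \<and> R \<in> L) \<or> (R = h \<and> S \<in> L)"
  shows "b_eff \<delta> (star_edge h L) (insert h L) (star_conf h L) S R ((insert h L) - {S, R}) = \<delta> + f_star (real k) \<delta>"
proof -
  define A where "A = \<delta> + 2 * (real k - 1) * \<delta>^2 / 3"
  have cW: "real (card ((insert h L) - {S, R})) = real k - 1"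
  proof -
    obtain l where l: "l \<in> L" "(insert h L) - {S, R} = L - {l}"
      using assms hL by blast
    have "card ((insert h L) - {S, R}) = k - 1" unfolding l(2) using l(1) fin cardL by simp
    then show ?thesis using k2 by (simp add: of_nat_diff)
  qed
  have sumW: "(\<Sum>w\<in>(insert h L) - {S, R}. bp \<delta> (star_edge h L) (insert h L) (star_conf h L) S w + bp \<delta> (star_edge h L) (insert h L) (star_conf h L) w R) = (real k - 1) * (A + 2 * \<delta>^2 / 3)"
  proof -
    have "(\<Sum>w\<in>(insert h L) - {S, R}. bp \<delta> (star_edge h L) (insert h L) (star_conf h L) S w + bp \<delta> (star_edge h L) (insert h L) (star_conf h L) w R) = (\<Sum>w\<in>(insert h L) - {S, R}. A + 2 * \<delta>^2 / 3)"
    proof (intro sum.cong refl)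
      fix w assume w: "w \<in> (insert h L) - {S, R}"
      show "bp \<delta> (star_edge h L) (insert h L) (star_conf h L) S w + bp \<delta> (star_edge h L) (insert h L) (star_conf h L) w R = A + 2 * \<delta>^2 / 3"
        using assms
      proof
        assume a: "S = h \<and> R \<in> L"
        then have "w \<in> L" "w \<noteq> R" using w by auto
        then show ?thesis using a bp_hub_leaf bp_leaf_leaf A_def by simp
      next
        assume a: "R = h \<and> S \<in> L"
        then have "w \<in> L" "w \<noteq> S" using w by auto
        then show ?thesis using a bp_leaf_hub bp_leaf_leaf A_def by (simp add: add.commute)
      qed
    qed
    also have "\<dots> = (real k - 1) * (A + 2 * \<delta>^2 / 3)" using cW by simp
    finally show ?thesis .
  qed
  have bSR: "bp \<delta> (star_edge h L) (insert h L) (star_conf h L) S R = A"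
    using assms bp_hub_leaf bp_leaf_hub A_def by auto
  show ?thesis unfolding b_eff_def sumW bSR cW by (rule final_alg[OF A_def])
qed

end


lemma f_pos:
  assumes "0 < \<delta>" "(1::real) < y"
  shows "f_star y \<delta> > 0"
proof -
  have "0 < 2 * (y + 1) * (y - 1)" using assms by simp
  moreover have "0 < 3 * y" using assms by simp
  ultimately have "0 < 2 * (y + 1) * (y - 1) / (3 * y)" by (rule divide_pos_pos)
  moreover have "0 < \<delta>^2" using assms by simp
  ultimately show ?thesis unfolding f_star_def by (rule mult_pos_pos)
qed

theorem proposition3:
  fixes \<delta> :: real and k :: nat and h :: 'a and L :: "'a set" and S R :: 'a
  assumes "0 < \<delta>" and "\<delta> < 1" and "2 \<le> k"
    and "finite L" and "card L = k" and "h \<notin> L"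
    and "(S = h \<and> R \<in> L) \<or> (R = h \<and> S \<in> L)"
  shows "b_eff \<delta> (star_edge h L) (insert h L) (star_conf h L) S R (insert h L - {S, R})
           = \<delta> + f_star (real k) \<delta>
    \<and> f_star (real k) \<delta> > 0
    \<and> (\<forall>x::real. x \<ge> 1 \<longrightarrow>
          (\<lambda>y. f_star y \<delta>) differentiable (at x) \<and> deriv (\<lambda>y. f_star y \<delta>) x > 0
          \<and> deriv (\<lambda>y. f_star y \<delta>) differentiable (at x)
          \<and> deriv (deriv (\<lambda>y. f_star y \<delta>)) x < 0)
    \<and> (\<forall>k1 k2 :: nat. 2 \<le> k1 \<longrightarrow> k1 \<le> k2 \<longrightarrow>
          N_part (\<delta> + f_star (real k2) \<delta>) \<le> N_part (\<delta> + f_star (real k1) \<delta>))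
    \<and> (\<forall>m :: nat. 2 \<le> m \<longrightarrow>
          f_star (real m + 2) \<delta> - f_star (real m + 1) \<delta> < f_star (real m + 1) \<delta> - f_star (real m) \<delta>)"
proof (intro conjI allI impI)
  show "b_eff \<delta> (star_edge h L) (insert h L) (star_conf h L) S R (insert h L - {S, R})
           = \<delta> + f_star (real k) \<delta>"
    by (rule beff_main[OF assms(4,5,6,3,7)])
  show "f_star (real k) \<delta> > 0" using assms(1,3) by (intro f_pos) auto
next
  fix x :: real assume "x \<ge> 1"
  note an = analytic[OF assms(1) this]
  show "(\<lambda>y. f_star y \<delta>) differentiable (at x)" using an by blast
  show "deriv (\<lambda>y. f_star y \<delta>) x > 0" using an by blast
  show "deriv (\<lambda>y. f_star y \<delta>) differentiable (at x)" using an by blast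
  show "deriv (deriv (\<lambda>y. f_star y \<delta>)) x < 0" using an by blast
next
  fix k1 k2 :: nat assume a: "2 \<le> k1" "k1 \<le> k2"
  have p: "0 < \<delta> + f_star (real k1) \<delta>" using f_pos[OF assms(1), of "real k1"] a assms(1) by simp
  have "f_star (real k1) \<delta> \<le> f_star (real k2) \<delta>" using a by (intro f_mono) auto
  then show "N_part (\<delta> + f_star (real k2) \<delta>) \<le> N_part (\<delta> + f_star (real k1) \<delta>)"
    using p by (intro N_part_mono) auto
next
  fix m :: nat assume "2 \<le> m"
  then show "f_star (real m + 2) \<delta> - f_star (real m + 1) \<delta> < f_star (real m + 1) \<delta> - f_star (real m) \<delta>"
    by (rule f_concave[OF assms(1)])
qed

end
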